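(* Let $G=(V,E)$ be a hypergraph and $\emptyset\neq R\subsetneq U\subsetneq V$. Let $S=\{u_1,\dots,u_p\}\subseteq U\setminus R$ with $p\ge 2$. For each $i\in[p]$ let $(\overline{A_i},A_i)$ be a minimum $((S\cup R)\setminus\{u_i\},\overline U)$-terminal cut, and suppose $u_i\in A_i\setminus\bigl(\bigcup_{j\in[p]\setminus\{i\}}A_j\bigr)$ for every $i\in[p]$. Let \[Z:=\bigcap_{i=1}^p\overline{A_i},\quad W:=\bigcup_{1\le i<j\le p}(A_i\cap A_j),\quad Y_i:=A_i\setminus W\ \ \forall i\in[p].\] Then $(Y_1,\dots,Y_p,W,Z)$ is a $(p+2)$-partition of $V$ with \[\sigma(Y_1,\dots,Y_p,W,Z)\le\min\{d(A_i)+d(A_j): i,j\in[p],\ i\ne j\}.\]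
   Context: A hypergraph $G=(V,E)$ has finite vertex set $V$ and finite multiset $E$ of hyperedges (subsets of $V$). For $X\subseteq V$, $\overline X=V\setminus X$ and $d(X)$ is the number of hyperedges meeting both $X$ and $\overline X$. For disjoint $S',T'\subseteq V$, a 2-partition $(X,\overline X)$ is an $(S',T')$-terminal cut if $S'\subseteq X\subseteq V\setminus T'$, and it is minimum if $d(X)$ is minimum among such cuts. For a partition $(Y_1,\dots,Y_p,W,Z)$ of $V$: $\mathrm{cost}(Y_1,\dots,Y_p,W,Z)$ is the number of hyperedges meeting at least two parts; $\mathrm{cost}(W,Z)$ is the number of hyperedges $e\subseteq W\cup Z$ meeting both $W$ and $Z$; $\alpha(Y_1,\dots,Y_p,W,Z)$ is the number of hyperedges meeting $Z$ and at least two of $Y_1,\dots,Y_p,W$; $\beta(Y_1,\dots,Y_p,Z)$ is the number of hyperedges disjoint from $Z$ meeting at least two of $Y_1,\dots,Y_p$; $\sigma:=\mathrm{cost}(Y_1,\dots,Y_p,W,Z)+\mathrm{cost}(W,Z)+\alpha+\beta$. *)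

theory Defs
  imports Main "HOL-Library.Multiset"
begin

text \<open>A hypergraph is a finite vertex set V together with a multiset E of hyperedges
  (subsets of V).  Sets X are cut sides; the complement is taken inside V.\<close>

definition hdeg :: "'a set \<Rightarrow> 'a set multiset \<Rightarrow> 'a set \<Rightarrow> nat" where
  "hdeg V E X = size {# e \<in># E. e \<inter> X \<noteq> {} \<and> e \<inter> (V - X) \<noteq> {} #}"

definition terminal_cut :: "'a set \<Rightarrow> 'a set \<Rightarrow> 'a set \<Rightarrow> 'a set \<Rightarrow> bool" where
  "terminal_cut V S' T' X \<longleftrightarrow> S' \<subseteq> X \<and> X \<subseteq> V - T'"

definition min_terminal_cut ::
  "'a set \<Rightarrow> 'a set multiset \<Rightarrow> 'a set \<Rightarrow> 'a set \<Rightarrow> 'a set \<Rightarrow> bool" where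
  "min_terminal_cut V E S' T' X \<longleftrightarrow> terminal_cut V S' T' X \<and>
     (\<forall>X'. terminal_cut V S' T' X' \<longrightarrow> hdeg V E X \<le> hdeg V E X')"

definition parts_met :: "'a set \<Rightarrow> 'a set list \<Rightarrow> nat" where
  "parts_met e Ps = length (filter (\<lambda>P. e \<inter> P \<noteq> {}) Ps)"

definition cost :: "'a set multiset \<Rightarrow> 'a set list \<Rightarrow> nat" where
  "cost E Ps = size {# e \<in># E. parts_met e Ps \<ge> 2 #}"

definition cost_WZ :: "'a set multiset \<Rightarrow> 'a set \<Rightarrow> 'a set \<Rightarrow> nat" where
  "cost_WZ E W Z = size {# e \<in># E. e \<subseteq> W \<union> Z \<and> e \<inter> W \<noteq> {} \<and> e \<inter> Z \<noteq> {} #}"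

definition alpha :: "'a set multiset \<Rightarrow> 'a set list \<Rightarrow> 'a set \<Rightarrow> 'a set \<Rightarrow> nat" where
  "alpha E Ys W Z = size {# e \<in># E. e \<inter> Z \<noteq> {} \<and> parts_met e (Ys @ [W]) \<ge> 2 #}"

definition beta :: "'a set multiset \<Rightarrow> 'a set list \<Rightarrow> 'a set \<Rightarrow> nat" where
  "beta E Ys Z = size {# e \<in># E. e \<inter> Z = {} \<and> parts_met e Ys \<ge> 2 #}"

definition sigma :: "'a set multiset \<Rightarrow> 'a set list \<Rightarrow> 'a set \<Rightarrow> 'a set \<Rightarrow> nat" where
  "sigma E Ys W Z = cost E (Ys @ [W, Z]) + cost_WZ E W Z + alpha E Ys W Z + beta E Ys Z"

end

theory Submission imports Defs begin

definition sgf :: "nat \<Rightarrow> bool \<Rightarrow> bool \<Rightarrow> nat" where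
  "sgf cK w z = (if 2 \<le> cK + of_bool w + of_bool z then 1 else 0)
     + (if cK = 0 \<and> w \<and> z then 1 else 0)
     + (if z \<and> 2 \<le> cK + of_bool w then 1 else 0)
     + (if \<not> z \<and> 2 \<le> cK then 1 else 0)"

lemma abstract_step:
  fixes c0 c2 cu :: nat
  assumes "c0 \<le> cu" "c2 \<le> cu" "cu \<le> c0 + c2"
  shows "sgf (c0 + of_bool yk) (wn \<or> c2 > 0 \<or> w3) z
         + of_bool (w3 \<and> (z \<or> yk \<or> c0 > 0 \<or> wn \<or> c2 > 0))
       \<le> sgf cu (wn \<or> w3) (z \<or> yk)
         + of_bool ((yk \<or> c2 > 0 \<or> w3) \<and> (z \<or> c0 > 0 \<or> wn))"
  using assms
  by (cases z; cases yk; cases wn; cases w3) (auto simp: sgf_def)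

definition mem :: "(nat \<Rightarrow> 'a set) \<Rightarrow> nat set \<Rightarrow> 'a \<Rightarrow> nat set" where
  "mem A I v = {l\<in>I. v \<in> A l}"
definition zfe :: "(nat \<Rightarrow> 'a set) \<Rightarrow> nat set \<Rightarrow> 'a set \<Rightarrow> bool" where
  "zfe A I e = (\<exists>v\<in>e. mem A I v = {})"
definition wfe :: "(nat \<Rightarrow> 'a set) \<Rightarrow> nat set \<Rightarrow> 'a set \<Rightarrow> bool" where
  "wfe A I e = (\<exists>v\<in>e. 2 \<le> card (mem A I v))"
definition KK :: "(nat \<Rightarrow> 'a set) \<Rightarrow> nat set \<Rightarrow> 'a set \<Rightarrow> nat set" where
  "KK A I e = {l\<in>I. \<exists>v\<in>e. mem A I v = {l}}"
definition sg :: "(nat \<Rightarrow> 'a set) \<Rightarrow> nat set \<Rightarrow> 'a set \<Rightarrow> nat" where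
  "sg A I e = sgf (card (KK A I e)) (wfe A I e) (zfe A I e)"
definition Wset :: "(nat \<Rightarrow> 'a set) \<Rightarrow> nat set \<Rightarrow> 'a set" where
  "Wset A I = {v. 2 \<le> card (mem A I v)}"
definition cr :: "'a set \<Rightarrow> 'a set \<Rightarrow> nat" where
  "cr X e = of_bool (e \<inter> X \<noteq> {} \<and> e - X \<noteq> {})"

lemma classify:
  assumes "finite M"
  shows "M = {} \<or> M = {k} \<or> (\<exists>l. l \<noteq> k \<and> M = {l}) \<or> (k \<notin> M \<and> 2 \<le> card M)
     \<or> (\<exists>l. l \<noteq> k \<and> M = {k,l}) \<or> (k \<in> M \<and> 3 \<le> card M)"
proof -
  consider "card M = 0" | "card M = 1" | "card M = 2" | "card M \<ge> 3" by linarith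
  then show ?thesis
  proof cases
    case 1 then show ?thesis using assms by simp
  next
    case 2 then show ?thesis by (auto simp: card_1_singleton_iff)
  next
    case 3 then obtain x y where "M = {x,y}" "x \<noteq> y" by (auto simp: card_2_iff)
    then show ?thesis using 3 by auto
  next
    case 4 then show ?thesis by auto
  qed
qed

lemma mem_sub: "mem A I v \<subseteq> I" by (auto simp: mem_def)
lemma mem_fin: "finite I \<Longrightarrow> finite (mem A I v)" by (auto simp: mem_def)
lemma mem_Diff: "mem A (I - {k}) v = mem A I v - {k}" by (auto simp: mem_def)

lemma step_edge:
  assumes fin: "finite I" and kI: "k \<in> I"
  shows "sg A I e + cr (A k \<inter> Wset A (I - {k})) e \<le> sg A (I - {k}) e + cr (A k) e"
proof -
  define M where "M = mem A I"
  have finM: "\<And>v. finite (M v)" using fin by (simp add: M_def mem_fin)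
  have MI: "\<And>v. M v \<subseteq> I" by (simp add: M_def mem_sub)
  have inA: "\<And>v l. l \<in> I \<Longrightarrow> v \<in> A l \<longleftrightarrow> l \<in> M v" by (auto simp: M_def mem_def)
  define yk where "yk = (\<exists>v\<in>e. M v = {k})"
  define wn where "wn = (\<exists>v\<in>e. 2 \<le> card (M v) \<and> k \<notin> M v)"
  define w3 where "w3 = (\<exists>v\<in>e. k \<in> M v \<and> 3 \<le> card (M v))"
  define K0 where "K0 = KK A I e - {k}"
  define L2 where "L2 = {l \<in> I - {k}. \<exists>v\<in>e. M v = {k,l}}"
  have finK0: "finite K0" using fin by (auto simp: K0_def KK_def)
  have finL2: "finite L2" using fin by (auto simp: L2_def)
  have c2: "\<And>l. l \<noteq> k \<Longrightarrow> card {k,l} = 2" by simp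
  have f1: "card (KK A I e) = card K0 + of_bool yk"
  proof -
    have "KK A I e = K0 \<union> (if yk then {k} else {})"
      using kI by (auto simp: K0_def KK_def yk_def M_def)
    have fKK: "finite (KK A I e)" using fin by (auto simp: KK_def)
    show ?thesis
    proof (cases yk)
      case True
      then have "k \<in> KK A I e" using kI by (auto simp: KK_def yk_def M_def)
      moreover have "card (KK A I e) > 0" using fKK calculation card_gt_0_iff by blast
      ultimately show ?thesis using True fKK by (simp add: K0_def card_Diff_singleton)
    next
      case False
      then show ?thesis using \<open>KK A I e = _\<close> by simp
    qed
  qed
  have f2: "wfe A I e = (wn \<or> card L2 > 0 \<or> w3)"
  proof
    assume "wfe A I e"
    then obtain v where v: "v \<in> e" "2 \<le> card (M v)" by (auto simp: wfe_def M_def)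
    show "wn \<or> card L2 > 0 \<or> w3"
      using classify[OF finM, of v k] v MI[of v] finL2
      by (elim disjE; auto simp: wn_def w3_def L2_def card_gt_0_iff; blast)
  next
    assume "wn \<or> card L2 > 0 \<or> w3"
    then show "wfe A I e"
      using finL2 apply (auto simp: wfe_def M_def[symmetric] wn_def w3_def L2_def card_gt_0_iff)
      apply (metis c2 order_refl)
      apply (rule_tac x=v in bexI; simp)
      done
  qed
  have f3: "zfe A (I - {k}) e = (zfe A I e \<or> yk)"
    by (auto simp: zfe_def mem_Diff M_def[symmetric] yk_def)
  have cardD: "\<And>v. 2 \<le> card (M v - {k}) \<longleftrightarrow> (k \<notin> M v \<and> 2 \<le> card (M v)) \<or> (k \<in> M v \<and> 3 \<le> card (M v))"
  proof -
    fix v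
    show "2 \<le> card (M v - {k}) \<longleftrightarrow> (k \<notin> M v \<and> 2 \<le> card (M v)) \<or> (k \<in> M v \<and> 3 \<le> card (M v))"
    proof (cases "k \<in> M v")
      case True
      then have "card (M v) > 0" using finM[of v] card_gt_0_iff by blast
      then show ?thesis using True finM[of v] by (simp add: card_Diff_singleton; linarith)
    qed simp
  qed
  have f4: "wfe A (I - {k}) e = (wn \<or> w3)"
    unfolding wfe_def mem_Diff M_def[symmetric] cardD wn_def w3_def by blast
  have pt5: "\<And>v l. l \<noteq> k \<Longrightarrow> (M v - {k} = {l}) \<longleftrightarrow> (M v = {l} \<or> M v = {k,l})"
    by auto
  have f5: "KK A (I - {k}) e = K0 \<union> L2"
  proof -
    have "KK A (I - {k}) e = {l \<in> I - {k}. \<exists>v\<in>e. M v - {k} = {l}}"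
      by (simp add: KK_def mem_Diff M_def)
    also have "\<dots> = {l \<in> I - {k}. \<exists>v\<in>e. M v = {l} \<or> M v = {k,l}}"
      using pt5 by auto
    also have "\<dots> = K0 \<union> L2"
      by (auto simp: K0_def L2_def KK_def M_def)
    finally show ?thesis .
  qed
  have h6a: "(\<exists>v\<in>e. k \<in> M v) \<longleftrightarrow> (yk \<or> card L2 > 0 \<or> w3)"
  proof
    assume "\<exists>v\<in>e. k \<in> M v"
    then obtain v where v: "v\<in>e" "k \<in> M v" by blast
    from classify[OF finM, of v k] show "yk \<or> card L2 > 0 \<or> w3"
      using v MI[of v] finL2
      by (elim disjE; auto simp: yk_def L2_def w3_def card_gt_0_iff; blast)
  next
    assume "yk \<or> card L2 > 0 \<or> w3"
    then show "\<exists>v\<in>e. k \<in> M v"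
      using finL2 by (auto simp: yk_def L2_def w3_def card_gt_0_iff)
  qed
  have h6b: "(\<exists>v\<in>e. k \<notin> M v) \<longleftrightarrow> (zfe A I e \<or> card K0 > 0 \<or> wn)"
  proof
    assume "\<exists>v\<in>e. k \<notin> M v"
    then obtain v where v: "v\<in>e" "k \<notin> M v" by blast
    from classify[OF finM, of v k] show "zfe A I e \<or> card K0 > 0 \<or> wn"
      using v MI[of v] finK0
      by (elim disjE; auto simp: zfe_def M_def[symmetric] K0_def KK_def wn_def card_gt_0_iff; blast)
  next
    assume "zfe A I e \<or> card K0 > 0 \<or> wn"
    then show "\<exists>v\<in>e. k \<notin> M v"
    proof (elim disjE)
      assume "card K0 > 0"
      then obtain l where "l \<in> K0" using card_gt_0_iff by force
      then show ?thesis by (auto simp: K0_def KK_def M_def)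
    qed (auto simp: zfe_def M_def[symmetric] wn_def)
  qed
  have f6: "cr (A k) e = of_bool ((yk \<or> card L2 > 0 \<or> w3) \<and> (zfe A I e \<or> card K0 > 0 \<or> wn))"
  proof -
    have "e \<inter> A k \<noteq> {} \<longleftrightarrow> (\<exists>v\<in>e. k \<in> M v)" using inA[OF kI] by blast
    moreover have "e - A k \<noteq> {} \<longleftrightarrow> (\<exists>v\<in>e. k \<notin> M v)" using inA[OF kI] by blast
    ultimately show ?thesis unfolding cr_def h6a h6b by simp
  qed
  have inB: "\<And>v. v \<in> A k \<inter> Wset A (I - {k}) \<longleftrightarrow> k \<in> M v \<and> 3 \<le> card (M v)"
    using inA[OF kI] cardD by (auto simp: Wset_def mem_Diff M_def[symmetric])
  have h7b: "(\<exists>v\<in>e. \<not> (k \<in> M v \<and> 3 \<le> card (M v))) \<longleftrightarrow> (zfe A I e \<or> yk \<or> card K0 > 0 \<or> wn \<or> card L2 > 0)"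
  proof
    assume "\<exists>v\<in>e. \<not> (k \<in> M v \<and> 3 \<le> card (M v))"
    then obtain v where v: "v\<in>e" "\<not> (k \<in> M v \<and> 3 \<le> card (M v))" by blast
    from classify[OF finM, of v k] show "zfe A I e \<or> yk \<or> card K0 > 0 \<or> wn \<or> card L2 > 0"
      using v MI[of v] finK0 finL2
      by (elim disjE; auto simp: zfe_def M_def[symmetric] K0_def KK_def wn_def yk_def L2_def card_gt_0_iff; blast)
  next
    assume "zfe A I e \<or> yk \<or> card K0 > 0 \<or> wn \<or> card L2 > 0"
    then show "\<exists>v\<in>e. \<not> (k \<in> M v \<and> 3 \<le> card (M v))"
    proof (elim disjE)
      assume "card K0 > 0"
      then obtain l where "l \<in> K0" using card_gt_0_iff by force
      then show ?thesis by (auto simp: K0_def KK_def M_def)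
    next
      assume "card L2 > 0"
      then obtain l where "l \<in> L2" using card_gt_0_iff by force
      then obtain v where "v \<in> e" "M v = {k,l}" "l \<noteq> k" by (auto simp: L2_def)
      then show ?thesis using c2[of l] by (intro bexI[of _ v]) auto
    next
      assume yk
      then obtain v where "v \<in> e" "M v = {k}" by (auto simp: yk_def)
      then show ?thesis by (intro bexI[of _ v]) auto
    qed (auto simp: zfe_def M_def[symmetric] wn_def)
  qed
  have f7: "cr (A k \<inter> Wset A (I - {k})) e = of_bool (w3 \<and> (zfe A I e \<or> yk \<or> card K0 > 0 \<or> wn \<or> card L2 > 0))"
  proof -
    have "e \<inter> (A k \<inter> Wset A (I - {k})) \<noteq> {} \<longleftrightarrow> w3" using inB by (auto simp: w3_def)
    moreover have "e - (A k \<inter> Wset A (I - {k})) \<noteq> {} \<longleftrightarrow> (\<exists>v\<in>e. \<not> (k \<in> M v \<and> 3 \<le> card (M v)))"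
      using inB by blast
    ultimately show ?thesis unfolding cr_def h7b by simp
  qed
  have cards: "card K0 \<le> card (K0 \<union> L2)" "card L2 \<le> card (K0 \<union> L2)" "card (K0 \<union> L2) \<le> card K0 + card L2"
    using finK0 finL2 by (auto simp: card_mono card_Un_le)
  show ?thesis
    unfolding sg_def f1 f2 f3 f4 f5 f6 f7
    by (rule abstract_step[OF cards])
qed


lemma size_filter_sum: "size (filter_mset P E) = (\<Sum>e\<in>#E. (of_bool (P e) :: nat))"
  by (induction E) auto

lemma sum_add: "(\<Sum>e\<in>#E. (f e + g e :: nat)) = (\<Sum>e\<in>#E. f e) + (\<Sum>e\<in>#E. g e)"
  by (induction E) auto

lemma hdeg_sum:
  assumes "\<forall>e\<in>#E. e \<subseteq> V" "X \<subseteq> V"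
  shows "hdeg V E (V - X) = (\<Sum>e\<in>#E. cr X e)" "hdeg V E X = (\<Sum>e\<in>#E. cr X e)"
  unfolding hdeg_def size_filter_sum
  by (intro arg_cong[where f=sum_mset] image_mset_cong; use assms in \<open>auto simp: cr_def\<close>)+

lemma sg_empty: "sg A {} e = 0"
  by (simp add: sg_def sgf_def KK_def wfe_def mem_def)

lemma sg_pair: "i \<noteq> j \<Longrightarrow> sg A {i,j} e \<le> cr (A i) e + cr (A j) e"
proof -
  assume ij: "i \<noteq> j"
  have "sg A {i,j} e \<le> sg A ({i,j} - {j}) e + cr (A j) e"
    using step_edge[of "{i,j}" j A e] by simp
  moreover have "{i,j} - {j} = {i}" using ij by auto
  moreover have "sg A {i} e \<le> sg A ({i} - {i}) e + cr (A i) e"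
    using step_edge[of "{i}" i A e] by simp
  ultimately show ?thesis by (simp add: sg_empty)
qed

lemma two_elems: "2 \<le> card (S::nat set) \<Longrightarrow> \<exists>a\<in>S. \<exists>b\<in>S. a < b"
proof -
  assume "2 \<le> card S"
  then obtain a B where aB: "S = insert a B" "a \<notin> B" "1 \<le> card B" "finite B"
    using card_le_Suc_iff[of 1 S] by auto
  then obtain b where "b \<in> B" by fastforce
  then have "a \<noteq> b" "a \<in> S" "b \<in> S" using aB by auto
  then show ?thesis by (metis linorder_neqE_nat)
qed

theorem lemma3p4:
  fixes V U R :: "'a set" and E :: "'a set multiset"
    and p :: nat and u :: "nat \<Rightarrow> 'a" and A :: "nat \<Rightarrow> 'a set"
  assumes finV: "finite V"
    and edges: "\<forall>e\<in>#E. e \<subseteq> V"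
    and R_ne: "R \<noteq> {}" and RU: "R \<subset> U" and UV: "U \<subset> V"
    and p2: "p \<ge> 2"
    and u_inj: "inj_on u {1..p}"
    and u_in: "u ` {1..p} \<subseteq> U - R"
    and A_sub: "\<forall>i\<in>{1..p}. A i \<subseteq> V"
    and A_cut: "\<forall>i\<in>{1..p}. min_terminal_cut V E ((u ` {1..p} \<union> R) - {u i}) (V - U) (V - A i)"
    and u_A: "\<forall>i\<in>{1..p}. u i \<in> A i - (\<Union>j\<in>{1..p} - {i}. A j)"
  defines "Z \<equiv> (\<Inter>i\<in>{1..p}. V - A i)"
    and "W \<equiv> (\<Union>i\<in>{1..p}. \<Union>j\<in>{1..p}. if i < j then A i \<inter> A j else {})"
    and "Y \<equiv> (\<lambda>i. A i - (\<Union>k\<in>{1..p}. \<Union>l\<in>{1..p}. if k < l then A k \<inter> A l else {}))"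
  shows "(\<forall>P\<in>set (map Y [1..<p+1] @ [W, Z]). P \<subseteq> V)
       \<and> \<Union> (set (map Y [1..<p+1] @ [W, Z])) = V
       \<and> (\<forall>i\<in>{1..p}. \<forall>j\<in>{1..p}. i \<noteq> j \<longrightarrow> Y i \<inter> Y j = {})
       \<and> (\<forall>i\<in>{1..p}. Y i \<inter> W = {} \<and> Y i \<inter> Z = {})
       \<and> W \<inter> Z = {}
       \<and> sigma E (map Y [1..<p+1]) W Z
           \<le> Min {hdeg V E (A i) + hdeg V E (A j) | i j. i \<in> {1..p} \<and> j \<in> {1..p} \<and> i \<noteq> j}"
proof -
  let ?I = "{1..p}"
  have finI: "finite ?I" by simp
  have Acut: "\<And>i. i \<in> ?I \<Longrightarrow> (u ` ?I \<union> R) - {u i} \<subseteq> V - A i \<and> V - A i \<subseteq> V - (V - U)"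
    using A_cut by (auto simp: min_terminal_cut_def terminal_cut_def)
  have minc: "\<And>i X'. i \<in> ?I \<Longrightarrow> terminal_cut V ((u ` ?I \<union> R) - {u i}) (V - U) X' \<Longrightarrow> hdeg V E (V - A i) \<le> hdeg V E X'"
    using A_cut by (auto simp: min_terminal_cut_def)
  have TA: "\<And>l v. l \<in> ?I \<Longrightarrow> v \<in> V - U \<Longrightarrow> v \<in> A l"
    using Acut by blast
  have Y_eq: "Y = (\<lambda>i. A i - W)" by (simp add: Y_def W_def)
  have Wiff: "\<And>v. v \<in> W \<longleftrightarrow> (\<exists>i\<in>?I. \<exists>j\<in>?I. i < j \<and> v \<in> A i \<and> v \<in> A j)"
    by (auto simp: W_def split: if_splits)
  have memW: "\<And>v. v \<in> W \<longleftrightarrow> 2 \<le> card (mem A ?I v)"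
  proof
    fix v assume "v \<in> W"
    then obtain i j where ij: "i \<in> ?I" "j \<in> ?I" "i < j" "v \<in> A i" "v \<in> A j" using Wiff by blast
    then have "{i,j} \<subseteq> mem A ?I v" by (auto simp: mem_def)
    moreover have "card {i,j} = 2" using ij by simp
    ultimately show "2 \<le> card (mem A ?I v)" using mem_fin[OF finI] by (metis card_mono)
  next
    fix v assume "2 \<le> card (mem A ?I v)"
    then obtain a b where "a \<in> mem A ?I v" "b \<in> mem A ?I v" "a < b" using two_elems by blast
    then have "a \<in> ?I" "b \<in> ?I" "v \<in> A a" "v \<in> A b" "a < b" by (auto simp: mem_def)
    then show "v \<in> W" unfolding Wiff by blast
  qed
  have p1: "1 \<in> ?I" using p2 by simp
  have Z_sub: "Z \<subseteq> V" using p1 by (auto simp: Z_def)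
  have memZ: "\<And>v. v \<in> V \<Longrightarrow> v \<in> Z \<longleftrightarrow> mem A ?I v = {}"
    using p1 by (auto simp: Z_def mem_def)
  have memY: "\<And>v l. l \<in> ?I \<Longrightarrow> v \<in> Y l \<longleftrightarrow> mem A ?I v = {l}"
  proof -
    fix v l assume l: "l \<in> ?I"
    show "v \<in> Y l \<longleftrightarrow> mem A ?I v = {l}"
    proof
      assume "v \<in> Y l"
      then have "v \<in> A l" "\<not> 2 \<le> card (mem A ?I v)" using memW by (auto simp: Y_eq)
      then have "l \<in> mem A ?I v" "card (mem A ?I v) \<le> 1" using l by (auto simp: mem_def)
      then show "mem A ?I v = {l}" using mem_fin[OF finI]
        using card_le_Suc0_iff_eq[OF mem_fin[OF finI], of A v] by auto
    next
      assume "mem A ?I v = {l}"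
      then show "v \<in> Y l" using memW l by (auto simp: Y_eq mem_def)
    qed
  qed
  have A_V: "\<And>i. i \<in> ?I \<Longrightarrow> A i \<subseteq> V" using A_sub by blast
  have W_sub: "W \<subseteq> V" using Wiff A_V by blast
  have Y_sub: "\<And>i. i \<in> ?I \<Longrightarrow> Y i \<subseteq> V" using A_V by (auto simp: Y_eq)
  have setI: "set [1..<p+1] = ?I" by auto

  have sig_eq: "sigma E (map Y [1..<p+1]) W Z = (\<Sum>e\<in>#E. sg A ?I e)"
  proof -
    have "sigma E (map Y [1..<p+1]) W Z = (\<Sum>e\<in>#E.
        of_bool (2 \<le> parts_met e (map Y [1..<p+1] @ [W, Z]))
      + of_bool (e \<subseteq> W \<union> Z \<and> e \<inter> W \<noteq> {} \<and> e \<inter> Z \<noteq> {})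
      + of_bool (e \<inter> Z \<noteq> {} \<and> 2 \<le> parts_met e (map Y [1..<p+1] @ [W]))
      + of_bool (e \<inter> Z = {} \<and> 2 \<le> parts_met e (map Y [1..<p+1])))"
      by (simp add: sigma_def cost_def cost_WZ_def alpha_def beta_def size_filter_sum sum_add)
    also have "\<dots> = (\<Sum>e\<in>#E. sg A ?I e)"
    proof (intro arg_cong[where f=sum_mset] image_mset_cong)
      fix e assume "e \<in># E"
      then have eV: "e \<subseteq> V" using edges by blast
      have finK: "finite (KK A ?I e)" by (auto simp: KK_def)
      have pc: "parts_met e (map Y [1..<p+1]) = card (KK A ?I e)"
      proof -
        have "parts_met e (map Y [1..<p+1]) = length (filter (\<lambda>l. e \<inter> Y l \<noteq> {}) [1..<p+1])"
          by (simp add: parts_met_def filter_map o_def)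
        also have "\<dots> = card ({l. e \<inter> Y l \<noteq> {}} \<inter> ?I)"
          by (subst distinct_length_filter) (simp_all only: setI distinct_upt)
        also have "{l. e \<inter> Y l \<noteq> {}} \<inter> ?I = KK A ?I e"
        proof -
          have hh: "\<And>l. l \<in> ?I \<Longrightarrow> (e \<inter> Y l \<noteq> {}) = (\<exists>v\<in>e. mem A ?I v = {l})"
            using memY by blast
          have "{l. e \<inter> Y l \<noteq> {}} \<inter> ?I = {l. l \<in> ?I \<and> e \<inter> Y l \<noteq> {}}" by blast
          also have "\<dots> = KK A ?I e" unfolding KK_def
            by (rule Collect_cong) (use hh in blast)
          finally show ?thesis .
        qed
        finally show ?thesis .
      qed
      have app: "\<And>xs ys. parts_met e (xs @ ys) = parts_met e xs + parts_met e ys"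
        by (simp add: parts_met_def)
      have ew: "(e \<inter> W = {}) = (\<not> wfe A ?I e)" unfolding wfe_def using memW by blast
      have ez: "(e \<inter> Z = {}) = (\<not> zfe A ?I e)" unfolding zfe_def using memZ eV by blast
      have ewz: "(e \<subseteq> W \<union> Z) = (card (KK A ?I e) = 0)"
      proof
        assume sub: "e \<subseteq> W \<union> Z"
        have "KK A ?I e = {}"
        proof (rule ccontr)
          assume "KK A ?I e \<noteq> {}"
          then obtain l v where "l \<in> ?I" "v \<in> e" "mem A ?I v = {l}" by (auto simp: KK_def)
          moreover have "v \<in> W \<or> v \<in> Z" using sub \<open>v \<in> e\<close> by blast
          ultimately show False using memW[of v] memZ[of v] eV by auto
        qed
        then show "card (KK A ?I e) = 0" by simp
      next
        assume "card (KK A ?I e) = 0"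
        then have K0: "KK A ?I e = {}" using finK by simp
        show "e \<subseteq> W \<union> Z"
        proof
          fix v assume v: "v \<in> e"
          have fm: "finite (mem A ?I v)" using mem_fin[OF finI] .
          consider "mem A ?I v = {}" | "card (mem A ?I v) = 1" | "2 \<le> card (mem A ?I v)"
          proof -
            have "mem A ?I v = {} \<or> card (mem A ?I v) = 1 \<or> 2 \<le> card (mem A ?I v)"
              proof (cases "mem A ?I v = {}")
              case False
              then have "card (mem A ?I v) \<noteq> 0" using fm by simp
              then show ?thesis by linarith
            qed simp
            then show ?thesis using that by blast
          qed
          then show "v \<in> W \<union> Z"
          proof cases
            case 1
            have "v \<in> V" using v eV by blast
            then have "v \<in> Z" using memZ[of v] 1 by simp
            then show ?thesis by blast
          next
            case 2
            then obtain l where l: "mem A ?I v = {l}" using card_1_singleton_iff[of "mem A ?I v"] by auto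
            then have "l \<in> ?I" using mem_sub[of A ?I v] by blast
            then have "l \<in> KK A ?I e" unfolding KK_def using v l by blast
            then show ?thesis using K0 by simp
          next
            case 3 then have "v \<in> W" using memW[of v] by simp
            then show ?thesis by blast
          qed
        qed
      qed
      show "of_bool (2 \<le> parts_met e (map Y [1..<p+1] @ [W, Z]))
      + of_bool (e \<subseteq> W \<union> Z \<and> e \<inter> W \<noteq> {} \<and> e \<inter> Z \<noteq> {})
      + of_bool (e \<inter> Z \<noteq> {} \<and> 2 \<le> parts_met e (map Y [1..<p+1] @ [W]))
      + of_bool (e \<inter> Z = {} \<and> 2 \<le> parts_met e (map Y [1..<p+1])) = sg A ?I e"
      proof -
        have pW: "parts_met e [W] = of_bool (wfe A ?I e)" using ew by (simp add: parts_met_def)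
        have pWZ: "parts_met e [W, Z] = of_bool (wfe A ?I e) + of_bool (zfe A ?I e)"
          using ew ez by (simp add: parts_met_def)
        show ?thesis
          unfolding sg_def sgf_def app pc ewz ew ez pW pWZ by simp
      qed
    qed
    finally show ?thesis .
  qed

  have key: "(\<Sum>e\<in>#E. sg A J e) \<le> (\<Sum>e\<in>#E. cr (A i) e) + (\<Sum>e\<in>#E. cr (A j) e)"
    if "J \<subseteq> ?I" "i \<in> J" "j \<in> J" "i \<noteq> j" for J i j
    using that
  proof (induction "card J" arbitrary: J rule: less_induct)
    case less
    show ?case
    proof (cases "J = {i,j}")
      case True
      have "(\<Sum>e\<in>#E. sg A J e) \<le> (\<Sum>e\<in>#E. cr (A i) e + cr (A j) e)"
        using sg_pair[OF less.prems(4)] True by (intro sum_mset_mono) auto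
      then show ?thesis by (simp add: sum_add)
    next
      case False
      then obtain k where k: "k \<in> J" "k \<noteq> i" "k \<noteq> j" using less.prems by blast
      define B where "B = A k \<inter> Wset A (J - {k})"
      have finJ: "finite J" using less.prems(1) finite_subset by blast
      have kI: "k \<in> ?I" using k less.prems by blast
      have st: "(\<Sum>e\<in>#E. sg A J e) + (\<Sum>e\<in>#E. cr B e) \<le> (\<Sum>e\<in>#E. sg A (J - {k}) e) + (\<Sum>e\<in>#E. cr (A k) e)"
      proof -
        have "(\<Sum>e\<in>#E. sg A J e + cr B e) \<le> (\<Sum>e\<in>#E. sg A (J - {k}) e + cr (A k) e)"
          using step_edge[OF finJ k(1)] unfolding B_def by (intro sum_mset_mono) auto
        then show ?thesis by (simp add: sum_add)
      qed
      have BA: "B \<subseteq> A k" by (simp add: B_def)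
      have tc: "terminal_cut V ((u ` ?I \<union> R) - {u k}) (V - U) (V - B)"
        unfolding terminal_cut_def
      proof
        show "(u ` ?I \<union> R) - {u k} \<subseteq> V - B" using Acut[OF kI] BA by blast
      next
        show "V - B \<subseteq> V - (V - U)"
        proof
          fix v assume v: "v \<in> V - B"
          show "v \<in> V - (V - U)"
          proof (rule ccontr)
            assume "v \<notin> V - (V - U)"
            then have vT: "v \<in> V - U" using v by blast
            have "{i,j} \<subseteq> mem A (J - {k}) v" using TA vT less.prems k by (auto simp: mem_def)
            moreover have "finite (mem A (J - {k}) v)" using finJ by (simp add: mem_fin)
            ultimately have "2 \<le> card (mem A (J - {k}) v)" using less.prems(4) by (metis card_2_iff card_mono)
            then have "v \<in> B" using TA[OF kI vT] by (simp add: B_def Wset_def)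
            then show False using v by blast
          qed
        qed
      qed
      have mc: "(\<Sum>e\<in>#E. cr (A k) e) \<le> (\<Sum>e\<in>#E. cr B e)"
      proof -
        have "hdeg V E (V - A k) \<le> hdeg V E (V - B)" using minc[OF kI tc] .
        moreover have "hdeg V E (V - A k) = (\<Sum>e\<in>#E. cr (A k) e)" using hdeg_sum(1)[OF edges A_V[OF kI]] .
        moreover have "hdeg V E (V - B) = (\<Sum>e\<in>#E. cr B e)" using hdeg_sum(1)[OF edges] BA A_V[OF kI] by blast
        ultimately show ?thesis by simp
      qed
      have ih: "(\<Sum>e\<in>#E. sg A (J - {k}) e) \<le> (\<Sum>e\<in>#E. cr (A i) e) + (\<Sum>e\<in>#E. cr (A j) e)"
      proof -
        have "card (J - {k}) < card J" by (rule card_Diff1_less[OF finJ k(1)])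
        moreover have "J - {k} \<subseteq> ?I" using less.prems(1) by blast
        ultimately show ?thesis using less.hyps[of "J - {k}"] less.prems k by simp
      qed
      show ?thesis using st mc ih by linarith
    qed
  qed
  have bound: "sigma E (map Y [1..<p+1]) W Z \<le> hdeg V E (A i) + hdeg V E (A j)"
    if "i \<in> ?I" "j \<in> ?I" "i \<noteq> j" for i j
    using key[of ?I i j] that sig_eq hdeg_sum(2)[OF edges A_V] by simp
  let ?S = "{hdeg V E (A i) + hdeg V E (A j) | i j. i \<in> ?I \<and> j \<in> ?I \<and> i \<noteq> j}"
  have finS: "finite ?S"
  proof -
    have "?S \<subseteq> {hdeg V E (A i) + hdeg V E (A j) | i j. i \<in> ?I \<and> j \<in> ?I}" by blast
    moreover have "finite {hdeg V E (A i) + hdeg V E (A j) | i j. i \<in> ?I \<and> j \<in> ?I}"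
      by (rule finite_image_set2) auto
    ultimately show ?thesis by (rule finite_subset)
  qed
  have neS: "?S \<noteq> {}"
  proof -
    have "(1::nat) \<in> ?I" "(2::nat) \<in> ?I" "(1::nat) \<noteq> 2" using p2 by auto
    then have "hdeg V E (A 1) + hdeg V E (A 2) \<in> ?S" by blast
    then show ?thesis by blast
  qed
  have final: "sigma E (map Y [1..<p+1]) W Z \<le> Min ?S"
  proof (rule Min.boundedI[OF finS neS])
    fix a assume "a \<in> ?S"
    then obtain i j where ij: "a = hdeg V E (A i) + hdeg V E (A j)" "i \<in> ?I" "j \<in> ?I" "i \<noteq> j" by blast
    show "sigma E (map Y [1..<p+1]) W Z \<le> a" unfolding ij(1) by (rule bound[OF ij(2-4)])
  qed
  have c1: "\<forall>P\<in>set (map Y [1..<p+1] @ [W, Z]). P \<subseteq> V"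
    unfolding set_append set_map setI using Y_sub W_sub Z_sub by auto
  have c2: "\<Union> (set (map Y [1..<p+1] @ [W, Z])) = V"
  proof
    show "\<Union> (set (map Y [1..<p+1] @ [W, Z])) \<subseteq> V" using c1 by blast
  next
    show "V \<subseteq> \<Union> (set (map Y [1..<p+1] @ [W, Z]))"
    proof
      fix v assume v: "v \<in> V"
      have fm: "finite (mem A ?I v)" using mem_fin[OF finI] .
      have "mem A ?I v = {} \<or> card (mem A ?I v) = 1 \<or> 2 \<le> card (mem A ?I v)"
      proof (cases "mem A ?I v = {}")
        case False
        then have "card (mem A ?I v) \<noteq> 0" using fm by simp
        then show ?thesis by linarith
      qed simp
      moreover
      {
        assume "mem A ?I v = {}"
        then have "v \<in> Z" using memZ[OF v] by simp
        then have "v \<in> \<Union> (set (map Y [1..<p+1] @ [W, Z]))" by simp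
      }
      moreover
      {
        assume "card (mem A ?I v) = 1"
        then obtain l where l: "mem A ?I v = {l}" using card_1_singleton_iff[of "mem A ?I v"] by auto
        then have lI: "l \<in> ?I" using mem_sub[of A ?I v] by blast
        then have "v \<in> Y l" using memY[OF lI, of v] l by simp
        moreover have "Y l \<in> set (map Y [1..<p+1] @ [W, Z])" unfolding set_append set_map setI using lI by blast
        ultimately have "v \<in> \<Union> (set (map Y [1..<p+1] @ [W, Z]))" by blast
      }
      moreover
      {
        assume "2 \<le> card (mem A ?I v)"
        then have "v \<in> W" using memW[of v] by simp
        then have "v \<in> \<Union> (set (map Y [1..<p+1] @ [W, Z]))" by simp
      }
      ultimately show "v \<in> \<Union> (set (map Y [1..<p+1] @ [W, Z]))" by blast
    qed
  qed
  have c3: "\<forall>i\<in>?I. \<forall>j\<in>?I. i \<noteq> j \<longrightarrow> Y i \<inter> Y j = {}"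
  proof (intro ballI impI equals0I)
    fix i j v assume i: "i \<in> ?I" and j: "j \<in> ?I" and ij: "i \<noteq> j" and v: "v \<in> Y i \<inter> Y j"
    then have "mem A ?I v = {i}" "mem A ?I v = {j}" using memY[OF i, of v] memY[OF j, of v] by auto
    then show False using ij by simp
  qed
  have c4: "\<forall>i\<in>?I. Y i \<inter> W = {} \<and> Y i \<inter> Z = {}"
    by (auto simp: Y_eq Z_def)
  have c5: "W \<inter> Z = {}"
  proof (rule equals0I)
    fix v assume v: "v \<in> W \<inter> Z"
    then have "v \<in> V" using Z_sub by blast
    then have "mem A ?I v = {}" using memZ v by blast
    moreover have "2 \<le> card (mem A ?I v)" using memW v by blast
    ultimately show False by simp
  qed
  show ?thesis using c1 c2 c3 c4 c5 final by blast
qed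

end
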